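(* Let $(M,g)$ be a four-dimensional oriented smooth Lorentzian manifold with Levi-Civita connection $\nabla$ and a smooth vector field $\tau^\mu$ with $\tau^\mu\tau_\mu=1$. Let $K^\nu$ be a smooth vector field with values in $\mathrm{Herm}(2)$ such that $K^\mu\tilde K^\nu+K^\nu\tilde K^\mu=2g^{\mu\nu}e$, $\nabla_\mu\pi_+(K^\mu)=0$ and $\pi_+(K^\nu)=\tau^\nu e$; set $L^\nu:=\pi_-(K^\nu)$. Let $C_\lambda$ be a smooth covector field with values in $\mathfrak{su}(2)$, and let $\varkappa_{\lambda\mu}{}^{\nu}$ be a smooth real tensor field with $\varkappa_{\lambda\mu}{}^{\lambda}=0$ and $\varkappa_{\lambda\mu\nu}=-\varkappa_{\lambda\nu\mu}$. If $$\nabla_\lambda L^\nu-[C_\lambda,L^\nu]=\varkappa_{\lambda\mu}{}^{\nu}L^\mu\quad\text{for all }\lambda,\nu,$$ then $$C_\lambda=-\tfrac14\big((\nabla_\lambda L^\nu)L_\nu-\varkappa_{\lambda\mu\nu}L^\mu L^\nu\big).$$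
   Context: Greek indices are raised/lowered with $g$ and repeated indices are summed. $e$ is the $2\times2$ identity matrix; $\mathrm{Herm}(2)$ is the set of Hermitian $2\times2$ matrices; $\mathfrak{su}(2)$ is the set of traceless anti-Hermitian $2\times2$ matrices. For $A\in\mathrm{Mat}(2,\mathbb{C})$: $\pi_+(A)=\tfrac12(\operatorname{tr}A)e$, $\pi_-(A)=A-\pi_+(A)$, $\tilde A=\pi_+(A)-\pi_-(A)$. Products of matrix-valued tensor fields are matrix products of their components; the covariant derivative of a matrix-valued tensor field $V=v_a\sigma^a$ (Pauli basis $\sigma^0=e,\sigma^1,\sigma^2,\sigma^3$, complex tensor fields $v_a$) is $(\nabla v_a)\sigma^a$. *)

theory Defs
  imports "HOL-Analysis.Analysis"
begin

text \<open>Local (coordinate chart) rendering: the manifold is an open set U of R^4,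
 indices range over the finite type 4, 2x2 complex matrices are complex^2^2.\<close>

type_synonym pt = "real^4"
type_synonym cmat = "complex^2^2"

definition pd :: "(pt \<Rightarrow> 'a::real_normed_vector) \<Rightarrow> 4 \<Rightarrow> pt \<Rightarrow> 'a" where
  "pd f mu x = vector_derivative (\<lambda>t::real. f (x + t *\<^sub>R axis mu 1)) (at 0)"

fun ipd :: "4 list \<Rightarrow> (pt \<Rightarrow> 'a::real_normed_vector) \<Rightarrow> pt \<Rightarrow> 'a" where
  "ipd [] f = f"
| "ipd (mu # ms) f = pd (ipd ms f) mu"

definition smooth_on :: "pt set \<Rightarrow> (pt \<Rightarrow> 'a::real_normed_vector) \<Rightarrow> bool" where
  "smooth_on U f \<longleftrightarrow> (\<forall>ms. ipd ms f differentiable_on U)"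

definition minkowski :: "real^4^4" where
  "minkowski = (\<chi> i j. if i = j then (if i = 0 then 1 else -1) else 0)"

definition lorentzian_metric :: "pt set \<Rightarrow> (pt \<Rightarrow> real^4^4) \<Rightarrow> bool" where
  "lorentzian_metric U g \<longleftrightarrow> open U \<and>
     (\<forall>i j. smooth_on U (\<lambda>x. g x $ i $ j)) \<and>
     (\<forall>x\<in>U. transpose (g x) = g x \<and>
        (\<exists>P. invertible P \<and> transpose P ** g x ** P = minkowski))"

definition ginv :: "(pt \<Rightarrow> real^4^4) \<Rightarrow> pt \<Rightarrow> real^4^4" where
  "ginv g x = matrix_inv (g x)"

definition christoffel :: "(pt \<Rightarrow> real^4^4) \<Rightarrow> pt \<Rightarrow> 4 \<Rightarrow> 4 \<Rightarrow> 4 \<Rightarrow> real" where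
  "christoffel g x rho mu nu = (1/2) * (\<Sum>s\<in>UNIV. ginv g x $ rho $ s *
     (pd (\<lambda>y. g y $ s $ nu) mu x + pd (\<lambda>y. g y $ s $ mu) nu x - pd (\<lambda>y. g y $ mu $ nu) s x))"

definition covD :: "(pt \<Rightarrow> real^4^4) \<Rightarrow> (pt \<Rightarrow> 4 \<Rightarrow> 'a::real_normed_vector) \<Rightarrow> 4 \<Rightarrow> 4 \<Rightarrow> pt \<Rightarrow> 'a" where
  "covD g V lam nu x = pd (\<lambda>y. V y nu) lam x + (\<Sum>mu\<in>UNIV. christoffel g x nu lam mu *\<^sub>R V x mu)"

definition mtrace :: "cmat \<Rightarrow> complex" where
  "mtrace A = (\<Sum>i\<in>UNIV. A $ i $ i)"

definition herm :: "cmat \<Rightarrow> bool" where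
  "herm A \<longleftrightarrow> (\<forall>i j. A $ i $ j = cnj (A $ j $ i))"

definition su2 :: "cmat \<Rightarrow> bool" where
  "su2 A \<longleftrightarrow> mtrace A = 0 \<and> (\<forall>i j. A $ i $ j = - cnj (A $ j $ i))"

definition pip :: "cmat \<Rightarrow> cmat" where
  "pip A = mat (mtrace A / 2)"

definition pim :: "cmat \<Rightarrow> cmat" where
  "pim A = A - pip A"

definition tilde :: "cmat \<Rightarrow> cmat" where
  "tilde A = pip A - pim A"

definition comm :: "cmat \<Rightarrow> cmat \<Rightarrow> cmat" where
  "comm A B = A ** B - B ** A"

end

theory Submission
  imports Defs
begin


lemma mm_sub_ldistrib: "(A::'a::ring_1^'n^'m) ** (B - C) = A ** B - A ** C"
  by (simp add: matrix_matrix_mult_def vec_eq_iff algebra_simps sum_subtractf)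
lemma mm_sub_rdistrib: "((B::'a::ring_1^'n^'m) - C) ** A = B ** A - C ** A"
  by (simp add: matrix_matrix_mult_def vec_eq_iff algebra_simps sum_subtractf)
lemma mm_add_rdistrib: "((B::'a::ring_1^'n^'m) + C) ** A = B ** A + C ** A"
  by (simp add: matrix_matrix_mult_def vec_eq_iff algebra_simps sum.distrib)

lemma outer_mid:
  fixes A :: "real^'n^'m" and B :: "real^'k^'n" and t :: "real^'n"
  shows "A ** (\<chi> i j. t$i * t$j) ** B = (\<chi> a b. (A *v t)$a * (t v* B)$b)"
  apply (simp add: matrix_matrix_mult_def matrix_vector_mult_def vector_matrix_mult_def vec_eq_iff
      sum_distrib_left sum_distrib_right mult_ac sum_product)
  apply (intro allI; subst sum.swap) apply (simp add: mult_ac)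
  done

lemma outer_vec:
  fixes t w :: "real^'n"
  shows "(\<chi> i j. t$i * t$j) *v w = (t \<bullet> w) *\<^sub>R t"
  by (simp add: matrix_vector_mult_def inner_vec_def vec_eq_iff sum_distrib_left sum_distrib_right mult_ac)

lemma dot_vm:
  fixes x :: "real^'m" and A :: "real^'n^'m" and y :: "real^'n"
  shows "(x v* A) \<bullet> y = x \<bullet> (A *v y)"
  apply (simp add: inner_vec_def vector_matrix_mult_def matrix_vector_mult_def sum_distrib_left sum_distrib_right mult_ac)
  apply (subst sum.swap) apply (simp add: mult_ac)
  done

lemma trace_zero_sq:
  fixes P :: "real^'n^'n"
  assumes "transpose P = P" "P ** P = P" "trace P = 0"
  shows "P = 0"
proof -
  have "trace (P ** P) = (\<Sum>i\<in>UNIV. \<Sum>j\<in>UNIV. (P$i$j)^2)"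
  proof -
    have "trace (P ** P) = (\<Sum>i\<in>UNIV. \<Sum>j\<in>UNIV. P$i$j * P$j$i)"
      by (simp add: trace_def matrix_matrix_mult_def)
    also have "\<dots> = (\<Sum>i\<in>UNIV. \<Sum>j\<in>UNIV. (P$i$j)^2)"
    proof -
      have "P$j$i = P$i$j" for i j using assms(1) by (metis transpose_def vec_lambda_beta)
      then show ?thesis by (simp add: power2_eq_square)
    qed
    finally show ?thesis .
  qed
  hence s: "(\<Sum>i\<in>UNIV. \<Sum>j\<in>UNIV. (P$i$j)^2) = 0" using assms by simp
  have "\<forall>i\<in>UNIV. (\<Sum>j\<in>UNIV. (P$i$j)^2) = 0"
    using s by (subst (asm) sum_nonneg_eq_0_iff) (auto intro: sum_nonneg)
  hence "\<forall>i j. (P$i$j)^2 = 0"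
    by (auto simp: sum_nonneg_eq_0_iff)
  thus ?thesis by (simp add: vec_eq_iff)
qed

lemma lemA:
  fixes G Gi :: "real^4^4" and t :: "real^4" and Lm :: "real^3^4"
  assumes GT: "transpose G = G" and GGi: "G ** Gi = mat 1" and GiG: "Gi ** G = mat 1"
    and tu: "t \<bullet> (G *v t) = 1"
    and LL: "Lm ** transpose Lm = (\<chi> i j. t$i * t$j) - Gi"
  shows "transpose Lm ** G ** Lm = - mat 1"
proof -
  define T :: "real^4^4" where "T = (\<chi> i j. t$i * t$j)"
  define M where "M = transpose Lm ** G ** Lm"
  define u where "u = transpose Lm *v (G *v t)"
  have "M ** M = transpose Lm ** G ** (Lm ** transpose Lm) ** G ** Lm"
    by (simp add: M_def matrix_mul_assoc)
  also have "\<dots> = transpose Lm ** G ** T ** G ** Lm - transpose Lm ** G ** (Gi ** G) ** Lm"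
    by (simp add: LL T_def mm_sub_ldistrib mm_sub_rdistrib matrix_mul_assoc)
  also have "transpose Lm ** G ** T ** G ** Lm = (\<chi> a b. u$a * u$b)"
  proof -
    have "transpose Lm ** G ** T ** G ** Lm = (transpose Lm ** G) ** T ** (G ** Lm)"
      by (simp add: matrix_mul_assoc)
    also have "\<dots> = (\<chi> a b. ((transpose Lm ** G) *v t)$a * (t v* (G ** Lm))$b)"
      unfolding T_def by (rule outer_mid)
    also have "(transpose Lm ** G) *v t = u" by (simp add: u_def matrix_vector_mul_assoc)
    also have "t v* (G ** Lm) = u"
      by (metis GT matrix_transpose_mul transpose_matrix_vector u_def matrix_vector_mul_assoc)
    finally show ?thesis .
  qed
  finally have MM: "M ** M = (\<chi> a b. u$a * u$b) - M"
    using GiG by (simp add: M_def)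
  have "u \<bullet> u = (G *v t) \<bullet> ((Lm ** transpose Lm) *v (G *v t))"
  proof -
    have "u = (G *v t) v* Lm" unfolding u_def by simp
    hence "u \<bullet> u = (G *v t) \<bullet> (Lm *v u)" by (simp add: dot_vm)
    also have "Lm *v u = (Lm ** transpose Lm) *v (G *v t)"
      unfolding u_def by (simp only: matrix_vector_mul_assoc matrix_mul_assoc)
    finally show ?thesis .
  qed
  also have "\<dots> = 0"
  proof -
    have "((\<chi> i j. t$i * t$j) - Gi) *v (G *v t) = (\<chi> i j. t$i * t$j) *v (G *v t) - Gi *v (G *v t)"
      by (simp add: matrix_vector_mult_diff_rdistrib)
    also have "Gi *v (G *v t) = t" using GiG by (simp add: matrix_vector_mul_assoc)
    also have "(\<chi> i j. t$i * t$j) *v (G *v t) = (t \<bullet> (G *v t)) *\<^sub>R t" by (rule outer_vec)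
    finally show ?thesis using tu by (simp add: LL inner_diff_right inner_commute)
  qed
  finally have "u = 0" by simp
  hence MM2: "M ** M = - M" using MM by (simp add: vec_eq_iff)
  define P where "P = mat 1 + M"
  have PT: "transpose P = P"
  proof -
    have tadd: "transpose (A + B) = transpose A + transpose (B::real^3^3)" for A B
      by (simp add: transpose_def vec_eq_iff)
    have "transpose M = M"
      by (simp add: M_def matrix_transpose_mul GT matrix_mul_assoc)
    thus ?thesis by (simp add: P_def tadd transpose_mat)
  qed
  have PP: "P ** P = P"
    using MM2 by (simp add: P_def matrix_add_ldistrib mm_add_rdistrib)
  have "trace M = trace (G ** (Lm ** transpose Lm))"
    by (metis M_def matrix_mul_assoc trace_mul_sym)
  also have "\<dots> = trace (G ** T) - 4"
    using GGi by (simp add: LL T_def mm_sub_ldistrib trace_def sum_subtractf mat_def)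
  also have "trace (G ** T) = 1"
    using tu by (simp add: T_def trace_def matrix_matrix_mult_def inner_vec_def matrix_vector_mult_def
        sum_distrib_left sum_distrib_right mult_ac)
  finally have "trace P = 0" by (simp add: P_def trace_def sum.distrib mat_def)
  hence "P = 0" using PT PP trace_zero_sq by blast
  thus ?thesis unfolding M_def[symmetric] P_def by (metis add.commute add_eq_0_iff)
qed



definition sig :: "3 \<Rightarrow> cmat" where
  "sig a = (\<chi> i j. if a = 1 then (if i = j then (if i = 1 then 1 else -1) else 0)
     else if a = 2 then (if i = j then 0 else 1)
     else (if i = j then 0 else if i = 1 then \<i> else - \<i>))"


lemma mm_sum_left: "(\<Sum>a\<in>A. f a) ** (Y::'b::comm_ring_1^'n^'m) = (\<Sum>a\<in>A. f a ** Y)"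
  by (induct A rule: infinite_finite_induct) (auto simp: mm_add_rdistrib)

lemma mm_sum_right: "(Y::'b::comm_ring_1^'n^'m) ** (\<Sum>a\<in>A. f a) = (\<Sum>a\<in>A. Y ** f a)"
  by (induct A rule: infinite_finite_induct) (auto simp: matrix_add_ldistrib)

lemma mm_scale_left: "(k *\<^sub>R A) ** (B::cmat) = k *\<^sub>R (A ** B)"
  by (simp add: scalar_matrix_assoc)
lemma mm_scale_right: "(A::cmat) ** (k *\<^sub>R B) = k *\<^sub>R (A ** B)"
  by (simp add: matrix_matrix_mult_def vec_eq_iff scaleR_sum_right)

lemma bridge:
  fixes G :: "real^4^4" and Lm :: "real^3^4" and L :: "4 \<Rightarrow> cmat"
  assumes rep: "\<And>n. L n = (\<Sum>a\<in>UNIV. Lm$n$a *\<^sub>R sig a)"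
  shows "(\<Sum>n\<in>UNIV. L n ** X ** (\<Sum>r\<in>UNIV. G$n$r *\<^sub>R L r))
       = (\<Sum>a\<in>UNIV. \<Sum>b\<in>UNIV. (transpose Lm ** G ** Lm)$a$b *\<^sub>R (sig a ** X ** sig b))"
proof -
  have "(\<Sum>n\<in>UNIV. L n ** X ** (\<Sum>r\<in>UNIV. G$n$r *\<^sub>R L r))
     = (\<Sum>n\<in>UNIV. \<Sum>r\<in>UNIV. \<Sum>b\<in>UNIV. \<Sum>a\<in>UNIV. (Lm$n$a * G$n$r * Lm$r$b) *\<^sub>R (sig a ** X ** sig b))"
    by (simp add: rep mm_sum_left mm_sum_right mm_scale_left mm_scale_right scaleR_sum_right mult_ac)
  also have "\<dots> = (\<Sum>n\<in>UNIV. \<Sum>r\<in>UNIV. \<Sum>a\<in>UNIV. \<Sum>b\<in>UNIV. (Lm$n$a * G$n$r * Lm$r$b) *\<^sub>R (sig a ** X ** sig b))"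
    by (rule sum.cong[OF refl], rule sum.cong[OF refl], rule sum.swap)
  also have "\<dots> = (\<Sum>n\<in>UNIV. \<Sum>a\<in>UNIV. \<Sum>r\<in>UNIV. \<Sum>b\<in>UNIV. (Lm$n$a * G$n$r * Lm$r$b) *\<^sub>R (sig a ** X ** sig b))"
    by (rule sum.cong[OF refl], rule sum.swap)
  also have "\<dots> = (\<Sum>a\<in>UNIV. \<Sum>n\<in>UNIV. \<Sum>r\<in>UNIV. \<Sum>b\<in>UNIV. (Lm$n$a * G$n$r * Lm$r$b) *\<^sub>R (sig a ** X ** sig b))"
    by (rule sum.swap)
  also have "\<dots> = (\<Sum>a\<in>UNIV. \<Sum>n\<in>UNIV. \<Sum>b\<in>UNIV. \<Sum>r\<in>UNIV. (Lm$n$a * G$n$r * Lm$r$b) *\<^sub>R (sig a ** X ** sig b))"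
    by (rule sum.cong[OF refl], rule sum.cong[OF refl], rule sum.swap)
  also have "\<dots> = (\<Sum>a\<in>UNIV. \<Sum>b\<in>UNIV. \<Sum>n\<in>UNIV. \<Sum>r\<in>UNIV. (Lm$n$a * G$n$r * Lm$r$b) *\<^sub>R (sig a ** X ** sig b))"
    by (rule sum.cong[OF refl], rule sum.swap)
  also have "\<dots> = (\<Sum>a\<in>UNIV. \<Sum>b\<in>UNIV. (transpose Lm ** G ** Lm)$a$b *\<^sub>R (sig a ** X ** sig b))"
    apply (simp add: matrix_matrix_mult_def transpose_def scaleR_sum_left sum_distrib_right)
    apply (rule sum.cong[OF refl], rule sum.cong[OF refl], rule sum.swap)
    done
  finally show ?thesis .
qed

lemma sig_id:
  "(\<Sum>a\<in>UNIV. sig a ** X ** sig a) = mat (2 * (X$1$1 + X$2$2)) - X"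
  by (simp add: sig_def vec_eq_iff forall_2 sum_2 sum_3 matrix_matrix_mult_def mat_def algebra_simps)


lemma mink_sq: "minkowski ** minkowski = mat 1"
proof -
  define d :: "4 \<Rightarrow> real" where "d i = (if i = 0 then 1 else -1)" for i
  have m: "minkowski = (\<chi> i j. if i = j then d i else 0)"
    unfolding minkowski_def d_def by (rule refl)
  have e: "(if i = k then d i else 0) * (if k = j then d k else 0)
      = (if k = i then (if i = j then d i * d i else 0) else 0)" for i j k :: 4
    by auto
  have dd: "d i * d i = 1" for i by (simp add: d_def)
  show ?thesis
    by (simp add: m matrix_matrix_mult_def mat_def vec_eq_iff e dd)
qed

lemma rep_sig:
  fixes A :: cmat
  assumes "Im (A$1$1) = 0" "A$2$2 = - A$1$1" "A$2$1 = cnj (A$1$2)"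
  shows "A = (\<Sum>a\<in>UNIV. (vector [Re (A$1$1), Re (A$1$2), Im (A$1$2)] :: real^3)$a *\<^sub>R sig a)"
  using assms by (simp add: vec_eq_iff forall_2 sum_3 sig_def complex_eq_iff)

lemma cliff_entry:
  fixes LA LB :: cmat and a b :: real
  assumes "Im (LA$1$1) = 0" "LA$2$2 = - LA$1$1" "LA$2$1 = cnj (LA$1$2)"
    "Im (LB$1$1) = 0" "LB$2$2 = - LB$1$1" "LB$2$1 = cnj (LB$1$2)"
  shows "Re (((a *\<^sub>R mat 1 + LA) ** (b *\<^sub>R mat 1 - LB) + (b *\<^sub>R mat 1 + LB) ** (a *\<^sub>R mat 1 - LA))$1$1)
    = 2 * (a * b - (Re (LA$1$1) * Re (LB$1$1) + Re (LA$1$2) * Re (LB$1$2) + Im (LA$1$2) * Im (LB$1$2)))"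
  using assms by (simp add: matrix_matrix_mult_def sum_2 mat_def algebra_simps)

lemma negI_sum:
  "(\<Sum>a\<in>UNIV. \<Sum>b\<in>UNIV. (- mat 1 :: real^3^3)$a$b *\<^sub>R (F a b :: cmat)) = - (\<Sum>a\<in>UNIV. F a a)"
proof -
  have e: "(- mat 1 :: real^3^3)$a$b *\<^sub>R (F a b :: cmat) = (if b = a then - F a a else 0)" for a b
    by (simp add: mat_def)
  show ?thesis by (simp only: e) (simp add: sum_negf)
qed

theorem theorem2:
  fixes U :: "pt set"
    and g :: "pt \<Rightarrow> real^4^4"
    and tau :: "pt \<Rightarrow> real^4"
    and K :: "pt \<Rightarrow> 4 \<Rightarrow> cmat"
    and C :: "pt \<Rightarrow> 4 \<Rightarrow> cmat"
    and kappa :: "pt \<Rightarrow> 4 \<Rightarrow> 4 \<Rightarrow> 4 \<Rightarrow> real"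
  assumes g: "lorentzian_metric U g"
    and tau_smooth: "\<forall>mu. smooth_on U (\<lambda>x. tau x $ mu)"
    and tau_unit: "\<forall>x\<in>U. (\<Sum>mu\<in>UNIV. \<Sum>nu\<in>UNIV. g x $ mu $ nu * tau x $ mu * tau x $ nu) = 1"
    and K_smooth: "\<forall>nu. smooth_on U (\<lambda>x. K x nu)"
    and K_herm: "\<forall>x\<in>U. \<forall>nu. herm (K x nu)"
    and K_cliff: "\<forall>x\<in>U. \<forall>mu nu. K x mu ** tilde (K x nu) + K x nu ** tilde (K x mu)
                     = (2 * ginv g x $ mu $ nu) *\<^sub>R mat 1"
    and K_div: "\<forall>x\<in>U. (\<Sum>mu\<in>UNIV. covD g (\<lambda>y nu. pip (K y nu)) mu mu x) = 0"
    and K_plus: "\<forall>x\<in>U. \<forall>nu. pip (K x nu) = tau x $ nu *\<^sub>R mat 1"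
    and C_smooth: "\<forall>lam. smooth_on U (\<lambda>x. C x lam)"
    and C_su2: "\<forall>x\<in>U. \<forall>lam. su2 (C x lam)"
    and kappa_smooth: "\<forall>lam mu nu. smooth_on U (\<lambda>x. kappa x lam mu nu)"
    and kappa_trace: "\<forall>x\<in>U. \<forall>mu. (\<Sum>lam\<in>UNIV. kappa x lam mu lam) = 0"
    and kappa_antisym: "\<forall>x\<in>U. \<forall>lam mu nu.
          (\<Sum>rho\<in>UNIV. kappa x lam mu rho * g x $ rho $ nu)
        = - (\<Sum>rho\<in>UNIV. kappa x lam nu rho * g x $ rho $ mu)"
    and eq: "\<forall>x\<in>U. \<forall>lam nu.
          covD g (\<lambda>y nu. pim (K y nu)) lam nu x - comm (C x lam) (pim (K x nu))
        = (\<Sum>mu\<in>UNIV. kappa x lam mu nu *\<^sub>R pim (K x mu))"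
  shows "\<forall>x\<in>U. \<forall>lam. C x lam = (- 1/4) *\<^sub>R
          ((\<Sum>nu\<in>UNIV. covD g (\<lambda>y nu. pim (K y nu)) lam nu x
                ** (\<Sum>rho\<in>UNIV. g x $ nu $ rho *\<^sub>R pim (K x rho)))
         - (\<Sum>mu\<in>UNIV. \<Sum>nu\<in>UNIV.
              (\<Sum>rho\<in>UNIV. kappa x lam mu rho * g x $ rho $ nu) *\<^sub>R (pim (K x mu) ** pim (K x nu))))"
  proof (intro ballI allI)
  fix x lam
  assume xU: "x \<in> U"
  define G where "G = g x"
  define Gi where "Gi = ginv g x"
  define t where "t = tau x"
  define L where "L n = pim (K x n)" for n
  define k where "k mu nu = kappa x lam mu nu" for mu nu
  define C0 where "C0 = C x lam"
  have GT: "transpose G = G" and "\<exists>P. invertible P \<and> transpose P ** G ** P = minkowski"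
    using g xU unfolding lorentzian_metric_def G_def by auto
  then obtain P where "transpose P ** G ** P = minkowski" by blast
  hence "det (transpose P ** G ** P) = det minkowski" by simp
  hence dP: "det P * det G * det P = det minkowski" by (simp add: det_mul)
  have "det minkowski * det minkowski = 1"
    using mink_sq by (metis det_I det_mul)
  hence "det G \<noteq> 0" using dP by auto
  hence invG: "invertible G" by (simp add: invertible_det_nz)
  have GGi: "G ** Gi = mat 1" and GiG: "Gi ** G = mat 1"
    using someI_ex[OF invG[unfolded invertible_def]]
    unfolding Gi_def ginv_def matrix_inv_def G_def by auto
  have tu: "t \<bullet> (G *v t) = 1"
  proof -
    have "t \<bullet> (G *v t) = (\<Sum>mu\<in>UNIV. \<Sum>nu\<in>UNIV. G $ mu $ nu * t $ mu * t $ nu)"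
      by (simp add: inner_vec_def matrix_vector_mult_def sum_distrib_left mult_ac)
    thus ?thesis using tau_unit xU by (simp add: G_def t_def)
  qed
  have KL: "K x n = t$n *\<^sub>R mat 1 + L n" for n
    using K_plus xU by (simp add: L_def pim_def t_def)
  have tK: "tilde (K x n) = t$n *\<^sub>R mat 1 - L n" for n
    using K_plus xU by (simp add: L_def pim_def t_def tilde_def)
  have Lprops: "Im (L n$1$1) = 0 \<and> L n$2$2 = - L n$1$1 \<and> L n$2$1 = cnj (L n$1$2)" for n
  proof -
    have h: "herm (K x n)" using K_herm xU by auto
    have p: "pip (K x n) = t$n *\<^sub>R mat 1" using K_plus xU by (simp add: t_def)
    have h11: "K x n$1$1 = cnj (K x n$1$1)" and h22: "K x n$2$2 = cnj (K x n$2$2)"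
      and h21: "K x n$2$1 = cnj (K x n$1$2)"
      using h[unfolded herm_def, rule_format] by blast+
    have "(pip (K x n))$1$1 = of_real (t$n)" unfolding p by (simp only: vector_scaleR_component) (simp add: mat_def scaleR_conv_of_real)
    hence tr: "K x n$1$1 + K x n$2$2 = 2 * of_real (t$n)"
      by (simp add: pip_def mtrace_def sum_2 mat_def field_simps)
    have e: "L n = K x n - t$n *\<^sub>R mat 1" using KL[of n] by simp
    show ?thesis
      using h11 h22 h21 tr unfolding e
      by (simp add: mat_def complex_eq_iff)
  qed
  define Lm :: "real^3^4" where
    "Lm = (\<chi> n a. (vector [Re (L n$1$1), Re (L n$1$2), Im (L n$1$2)] :: real^3) $ a)"
  have Lrep: "L n = (\<Sum>a\<in>UNIV. Lm$n$a *\<^sub>R sig a)" for n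
    unfolding Lm_def using rep_sig[of "L n"] Lprops[of n] by simp
  have LL: "Lm ** transpose Lm = (\<chi> i j. t$i * t$j) - Gi"
  proof -
    have "(Lm ** transpose Lm)$m$n = t$m * t$n - Gi$m$n" for m n
    proof -
      have c: "K x m ** tilde (K x n) + K x n ** tilde (K x m) = (2 * Gi $ m $ n) *\<^sub>R mat 1"
        using K_cliff xU by (simp add: Gi_def)
      have "Re ((K x m ** tilde (K x n) + K x n ** tilde (K x m))$1$1) = 2 * Gi $ m $ n"
        unfolding c by (simp add: mat_def)
      moreover have "Re ((K x m ** tilde (K x n) + K x n ** tilde (K x m))$1$1)
          = 2 * (t$m * t$n - (Re (L m$1$1) * Re (L n$1$1) + Re (L m$1$2) * Re (L n$1$2) + Im (L m$1$2) * Im (L n$1$2)))"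
        unfolding tK unfolding KL using Lprops[of m] Lprops[of n] by (intro cliff_entry) auto
      ultimately show ?thesis
        by (simp add: Lm_def matrix_matrix_mult_def transpose_def sum_3)
    qed
    thus ?thesis by (simp add: vec_eq_iff)
  qed
  have M: "transpose Lm ** G ** Lm = - mat 1"
    by (rule lemA[OF GT GGi GiG tu LL])
  define S where "S X = (\<Sum>n\<in>UNIV. L n ** X ** (\<Sum>r\<in>UNIV. G$n$r *\<^sub>R L r))" for X
  have SX: "S X = X - mat (2 * (X$1$1 + X$2$2))" for X
  proof -
    have "S X = (\<Sum>a\<in>UNIV. \<Sum>b\<in>UNIV. (transpose Lm ** G ** Lm)$a$b *\<^sub>R (sig a ** X ** sig b))"
      unfolding S_def by (rule bridge[OF Lrep])
    also have "\<dots> = - (\<Sum>a\<in>UNIV. sig a ** X ** sig a)"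
      unfolding M by (rule negI_sum)
    finally show ?thesis by (simp add: sig_id)
  qed
  have S1: "S (mat 1) = (-3) *\<^sub>R mat 1"
    by (simp add: SX mat_def vec_eq_iff forall_2 scaleR_conv_of_real)
  have trC: "C0$1$1 + C0$2$2 = 0"
  proof -
    have "su2 C0" using C_su2 xU by (simp add: C0_def)
    hence "mtrace C0 = 0" unfolding su2_def by blast
    thus ?thesis by (simp add: mtrace_def sum_2)
  qed
  have SC: "S C0 = C0" using trC by (simp add: SX mat_def vec_eq_iff)
  define D where "D nu = covD g (\<lambda>y nu. pim (K y nu)) lam nu x" for nu
  define Ld where "Ld nu = (\<Sum>rho\<in>UNIV. G$nu$rho *\<^sub>R L rho)" for nu
  define BB where "BB = (\<Sum>mu\<in>UNIV. \<Sum>nu\<in>UNIV.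
              (\<Sum>rho\<in>UNIV. k mu rho * G $ rho $ nu) *\<^sub>R (L mu ** L nu))"
  have Deq: "D nu = comm C0 (L nu) + (\<Sum>mu\<in>UNIV. k mu nu *\<^sub>R L mu)" for nu
  proof -
    have "D nu - comm C0 (L nu) = (\<Sum>mu\<in>UNIV. k mu nu *\<^sub>R L mu)"
      using eq xU unfolding D_def C0_def L_def k_def by blast
    thus ?thesis by (metis diff_eq_eq add.commute)
  qed
  have part1: "(\<Sum>nu\<in>UNIV. comm C0 (L nu) ** Ld nu) = C0 ** S (mat 1) - S C0"
    by (simp add: comm_def S_def Ld_def mm_sub_rdistrib sum_subtractf mm_sum_right matrix_mul_assoc)
  have part2: "(\<Sum>nu\<in>UNIV. (\<Sum>mu\<in>UNIV. k mu nu *\<^sub>R L mu) ** Ld nu) = BB"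
  proof -
    have "(\<Sum>nu\<in>UNIV. (\<Sum>mu\<in>UNIV. k mu nu *\<^sub>R L mu) ** Ld nu)
       = (\<Sum>v\<in>UNIV. \<Sum>r\<in>UNIV. \<Sum>mu\<in>UNIV. (k mu v * G$v$r) *\<^sub>R (L mu ** L r))"
      by (simp add: Ld_def mm_sum_left mm_sum_right mm_scale_left mm_scale_right scaleR_sum_right mult_ac)
    also have "\<dots> = (\<Sum>v\<in>UNIV. \<Sum>mu\<in>UNIV. \<Sum>r\<in>UNIV. (k mu v * G$v$r) *\<^sub>R (L mu ** L r))"
      by (rule sum.cong[OF refl], rule sum.swap)
    also have "\<dots> = (\<Sum>mu\<in>UNIV. \<Sum>v\<in>UNIV. \<Sum>r\<in>UNIV. (k mu v * G$v$r) *\<^sub>R (L mu ** L r))"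
      by (rule sum.swap)
    also have "\<dots> = (\<Sum>mu\<in>UNIV. \<Sum>r\<in>UNIV. \<Sum>v\<in>UNIV. (k mu v * G$v$r) *\<^sub>R (L mu ** L r))"
      by (rule sum.cong[OF refl], rule sum.swap)
    also have "\<dots> = BB"
      by (simp add: BB_def scaleR_sum_left)
    finally show ?thesis .
  qed
  have "(\<Sum>nu\<in>UNIV. D nu ** Ld nu) = C0 ** S (mat 1) - S C0 + BB"
    unfolding Deq using part1 part2 by (simp add: mm_add_rdistrib sum.distrib)
  also have "\<dots> = (-3) *\<^sub>R C0 - 1 *\<^sub>R C0 + BB"
  proof -
    have c3: "C0 ** ((-3) *\<^sub>R mat 1) = (-3) *\<^sub>R C0"
      by (simp only: mm_scale_right matrix_mul_rid)
    show ?thesis unfolding S1 SC c3 by simp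
  qed
  also have "\<dots> = (-4) *\<^sub>R C0 + BB"
    by (simp only: scaleR_diff_left[symmetric]) simp
  finally have fin: "(\<Sum>nu\<in>UNIV. D nu ** Ld nu) = (-4) *\<^sub>R C0 + BB" .
  show "C x lam = (- 1/4) *\<^sub>R
          ((\<Sum>nu\<in>UNIV. covD g (\<lambda>y nu. pim (K y nu)) lam nu x
                ** (\<Sum>rho\<in>UNIV. g x $ nu $ rho *\<^sub>R pim (K x rho)))
         - (\<Sum>mu\<in>UNIV. \<Sum>nu\<in>UNIV.
              (\<Sum>rho\<in>UNIV. kappa x lam mu rho * g x $ rho $ nu) *\<^sub>R (pim (K x mu) ** pim (K x nu))))"
  proof -
    have X: "C0 = (- 1/4) *\<^sub>R ((\<Sum>nu\<in>UNIV. D nu ** Ld nu) - BB)"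
      unfolding fin by simp
    show ?thesis
      by (rule X[unfolded D_def Ld_def BB_def L_def k_def G_def C0_def])
  qed
qed

end
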